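(* Let $P\subset V$ be a rational convex polyhedron with $\dim(P)=\ell$, and let $\sigma\in\mathrm{lin}(P)\cap\Lambda_{\mathbb{Q}}$. Then the difference $[C_P\cap(\mathbb{Z}\oplus\Lambda)]-[C_{P,\sigma}\cap(\mathbb{Z}\oplus\Lambda)]$ belongs to $\mathcal{S}_{\ell-1}(\Lambda)$. Moreover, if $P$ is a cone with apex set $L$, then this difference is a finite signed sum of characteristic functions $[C_{P',\sigma'}\cap(\mathbb{Z}\oplus\Lambda)]$ where each $P'$ is a cone of dimension at most $\ell-1$ with apex set $L$ and $\sigma'\in\Lambda_{\mathbb{Q}}$.
   Context: $V$ finite-dimensional real vector space, $\Lambda\subset V$ full-rank lattice, $\Lambda_{\mathbb{Q}}=\Lambda\otimes\mathbb{Q}$. Rational polyhedron: finite intersection of half-spaces $\{v:\langle a,v\rangle\ge c\}$, $a\in\mathrm{Hom}(\Lambda,\mathbb{Z})\otimes\mathbb{Q}$, $c\in\mathbb{Q}$; $\mathrm{lin}(P)$ is the linear subspace parallel to its affine hull and $\dim P=\dim\mathrm{lin}(P)$. $C_{P,\sigma}=\{(t,tv+\sigma):t>0,v\in P\}\subset\mathbb{R}\oplus V$, $C_P=C_{P,0}$, and $[\,\cdot\,]$ denotes indicator functions. A cone is a rational polyhedron $w+K$ with $K$ a closed convex polyhedral cone, with apex set $w+(K\cap -K)$. Quasi-polynomials: algebra generated by polynomials and periodic functions. $\mathcal{S}(\Lambda)$: functions on $\mathbb{Z}\oplus\Lambda$ of the form $\sum_{P\in\mathcal{P}}\sum_{\sigma\in\Sigma_P}q_{P,\sigma}[C_{P,\sigma}]$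 with $\mathcal{P}$ rational polyhedra, $\Sigma_P\subset\Lambda_{\mathbb{Q}}$, $q_{P,\sigma}$ quasi-polynomial, and $\{P+[0,1]\sigma\}$ locally finite in $V$. For $0\le j\le\dim V$, $\mathcal{S}_j(\Lambda)$ is the subspace of $m\in\mathcal{S}(\Lambda)$ admitting such an expression with all polyhedra of dimension $\le j$, and $\mathcal{S}_{-1}(\Lambda)=\{0\}$. *)

theory Defs
  imports "HOL-Analysis.Analysis"
begin

text \<open>The ambient space V is modelled as real^'n (any finite-dimensional real
vector space is isomorphic to one of these); Lambda is an arbitrary full-rank lattice.\<close>

definition full_rank_lattice :: "(real^'n) set \<Rightarrow> bool" where
  "full_rank_lattice Lam \<longleftrightarrow>
     (\<exists>b :: 'n \<Rightarrow> real^'n. inj b \<and> independent (range b) \<and>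
        Lam = range (\<lambda>z :: 'n \<Rightarrow> int. \<Sum>i\<in>UNIV. of_int (z i) *\<^sub>R b i))"

definition rat_lattice :: "(real^'n) set \<Rightarrow> (real^'n) set" where
  "rat_lattice Lam = {(1 / real m) *\<^sub>R x | m x. m > 0 \<and> x \<in> Lam}"

text \<open>Elements of Hom(Lambda,Z) tensor Q, represented via the inner product.\<close>
definition rat_functional :: "(real^'n) set \<Rightarrow> real^'n \<Rightarrow> bool" where
  "rat_functional Lam a \<longleftrightarrow> (\<forall>x\<in>Lam. a \<bullet> x \<in> \<rat>)"

definition rat_polyhedron :: "(real^'n) set \<Rightarrow> (real^'n) set \<Rightarrow> bool" where
  "rat_polyhedron Lam P \<longleftrightarrow>
     (\<exists>F. finite F \<and> (\<forall>(a,c)\<in>F. rat_functional Lam a \<and> c \<in> \<rat>) \<and>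
          P = (\<Inter>(a,c)\<in>F. {v. a \<bullet> v \<ge> c}))"

definition lin_space :: "(real^'n) set \<Rightarrow> (real^'n) set" where
  "lin_space P = span {x - y | x y. x \<in> P \<and> y \<in> P}"

definition coneC :: "(real^'n) set \<Rightarrow> real^'n \<Rightarrow> (real \<times> (real^'n)) set" where
  "coneC P \<sigma> = {(t, t *\<^sub>R v + \<sigma>) | t v. t > 0 \<and> v \<in> P}"

definition ZLat :: "(real^'n) set \<Rightarrow> (real \<times> (real^'n)) set" where
  "ZLat Lam = {(t, v). t \<in> \<int> \<and> v \<in> Lam}"

definition lat_ind :: "(real^'n) set \<Rightarrow> (real^'n) set \<Rightarrow> real^'n \<Rightarrow> real \<times> (real^'n) \<Rightarrow> real" where
  "lat_ind Lam P \<sigma> = indicator (coneC P \<sigma> \<inter> ZLat Lam)"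

text \<open>Quasi-polynomials on Z + Lambda: algebra generated by polynomials (constants and
coordinate functions) and periodic functions (periodic w.r.t. m(Z + Lambda), m>0, which
every finite-index sublattice contains).\<close>
inductive_set quasi_poly :: "(real^'n) set \<Rightarrow> (real \<times> (real^'n) \<Rightarrow> real) set"
  for Lam :: "(real^'n) set" where
  qp_const: "(\<lambda>_. c) \<in> quasi_poly Lam"
| qp_t: "(\<lambda>x. fst x) \<in> quasi_poly Lam"
| qp_coord: "(\<lambda>x. snd x $ i) \<in> quasi_poly Lam"
| qp_periodic: "m > (0::nat) \<Longrightarrow>
     (\<forall>x\<in>ZLat Lam. \<forall>y\<in>ZLat Lam. f (x + of_nat m *\<^sub>R y) = f x) \<Longrightarrow> f \<in> quasi_poly Lam"
| qp_add: "f \<in> quasi_poly Lam \<Longrightarrow> g \<in> quasi_poly Lam \<Longrightarrow> (\<lambda>x. f x + g x) \<in> quasi_poly Lam"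
| qp_mult: "f \<in> quasi_poly Lam \<Longrightarrow> g \<in> quasi_poly Lam \<Longrightarrow> (\<lambda>x. f x * g x) \<in> quasi_poly Lam"

definition locally_finite_family :: "'i set \<Rightarrow> ('i \<Rightarrow> (real^'n) set) \<Rightarrow> bool" where
  "locally_finite_family I A \<longleftrightarrow>
     (\<forall>x. \<exists>U. open U \<and> x \<in> U \<and> finite {i\<in>I. A i \<inter> U \<noteq> {}})"

text \<open>The (pointwise finite, by local finiteness) sum is taken over the pairs whose cone
contains the point.  For j = -1 this gives exactly the zero function.\<close>
definition S_j :: "(real^'n) set \<Rightarrow> int \<Rightarrow> (real \<times> (real^'n) \<Rightarrow> real) set" where
  "S_j Lam j = {m. \<exists>(I :: ((real^'n) set \<times> (real^'n)) set) q.
      (\<forall>(P,\<sigma>)\<in>I. rat_polyhedron Lam P \<and> aff_dim P \<le> j \<and> \<sigma> \<in> rat_lattice Lam) \<and>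
      (\<forall>i\<in>I. q i \<in> quasi_poly Lam) \<and>
      locally_finite_family I (\<lambda>(P,\<sigma>). P + closed_segment 0 \<sigma>) \<and>
      (\<forall>x\<in>ZLat Lam. m x = (\<Sum>i\<in>{i\<in>I. x \<in> coneC (fst i) (snd i)}. q i x))}"

definition rat_cone_with_apex :: "(real^'n) set \<Rightarrow> (real^'n) set \<Rightarrow> (real^'n) set \<Rightarrow> bool" where
  "rat_cone_with_apex Lam P L \<longleftrightarrow> rat_polyhedron Lam P \<and>
     (\<exists>w K. K \<noteq> {} \<and> cone K \<and> convex K \<and> closed K \<and> polyhedron K \<and>
        P = (\<lambda>k. w + k) ` K \<and> L = (\<lambda>k. w + k) ` (K \<inter> uminus ` K))"

end

theory Submission
  imports Defs
begin

lemma crit_upper: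
  fixes G s :: "'i \<Rightarrow> real"
  assumes fin: "finite F" and Amu: "\<forall>i\<in>F. \<mu> * s i \<le> G i"
    and nAnu: "\<not> (\<forall>i\<in>F. \<nu> * s i \<le> G i)" and lt: "\<mu> < \<nu>"
  shows "\<exists>\<beta>. \<mu> \<le> \<beta> \<and> \<beta> < \<nu> \<and> (\<forall>i\<in>F. \<beta> * s i \<le> G i) \<and> (\<exists>i\<in>F. s i > 0 \<and> G i = \<beta> * s i)"
proof -
  define W where "W = {i\<in>F. s i > 0 \<and> G i < \<nu> * s i}"
  obtain i0 where i0: "i0 \<in> F" "G i0 < \<nu> * s i0" using nAnu by auto
  have "s i0 > 0"
  proof (rule ccontr)
    assume "\<not> s i0 > 0"
    then have "\<nu> * s i0 \<le> \<mu> * s i0" using lt by (simp add: mult_right_mono_neg)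
    then show False using Amu i0 by force
  qed
  then have i0W: "i0 \<in> W" using i0 W_def by auto
  have finW: "finite W" using fin W_def by auto
  define \<beta> where "\<beta> = Min ((\<lambda>i. G i / s i) ` W)"
  have "\<beta> \<in> (\<lambda>i. G i / s i) ` W" unfolding \<beta>_def using finW i0W by (intro Min_in) auto
  then obtain j where j: "j \<in> W" "\<beta> = G j / s j" by auto
  have le: "\<beta> \<le> G i / s i" if "i \<in> W" for i unfolding \<beta>_def using finW that by auto
  have sj: "s j > 0" "G j < \<nu> * s j" "j \<in> F" using j W_def by auto
  have tight: "G j = \<beta> * s j" using j(2) sj by simp
  have "\<beta> < \<nu>" using sj tight by (metis mult_less_cancel_right_pos)
  have "\<mu> * s j \<le> G j" using Amu sj by auto
  then have "\<mu> \<le> \<beta>" using sj tight by (metis mult_le_cancel_right_pos)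
  have A: "\<beta> * s i \<le> G i" if "i \<in> F" for i
  proof (cases "s i > 0")
    case True
    show ?thesis
    proof (cases "i \<in> W")
      case True
      then have "\<beta> \<le> G i / s i" by (rule le)
      then show ?thesis using \<open>s i > 0\<close> by (simp add: pos_le_divide_eq)
    next
      case False
      then have "\<nu> * s i \<le> G i" using W_def that True by auto
      moreover have "\<beta> * s i \<le> \<nu> * s i" using \<open>\<beta> < \<nu>\<close> True by simp
      ultimately show ?thesis by linarith
    qed
  next
    case False
    then have "\<beta> * s i \<le> \<mu> * s i" using \<open>\<mu> \<le> \<beta>\<close> by (simp add: mult_right_mono_neg)
    then show ?thesis using Amu that by force
  qed
  show ?thesis using \<open>\<mu> \<le> \<beta>\<close> \<open>\<beta> < \<nu>\<close> A sj tight by (intro exI[of _ \<beta>] conjI) auto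
qed

lemma crit_lower:
  fixes G s :: "'i \<Rightarrow> real"
  assumes fin: "finite F" and Anu: "\<forall>i\<in>F. \<nu> * s i \<le> G i"
    and nAmu: "\<not> (\<forall>i\<in>F. \<mu> * s i \<le> G i)" and lt: "\<mu> < \<nu>"
  shows "\<exists>\<alpha>. \<mu> < \<alpha> \<and> \<alpha> \<le> \<nu> \<and> (\<forall>i\<in>F. \<alpha> * s i \<le> G i) \<and> (\<exists>i\<in>F. s i < 0 \<and> G i = \<alpha> * s i)"
proof -
  have "\<exists>\<beta>. -\<nu> \<le> \<beta> \<and> \<beta> < -\<mu> \<and> (\<forall>i\<in>F. \<beta> * (- s i) \<le> G i) \<and> (\<exists>i\<in>F. - s i > 0 \<and> G i = \<beta> * (- s i))"
    by (rule crit_upper[OF fin]) (use Anu nAmu lt in auto)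
  then obtain \<beta> where "-\<nu> \<le> \<beta>" "\<beta> < -\<mu>" "\<forall>i\<in>F. \<beta> * (- s i) \<le> G i" "\<exists>i\<in>F. - s i > 0 \<and> G i = \<beta> * (- s i)"
    by blast
  then show ?thesis by (intro exI[of _ "-\<beta>"]) auto
qed

lemma crit_no_upper:
  fixes G s :: "'i \<Rightarrow> real"
  assumes "\<forall>i\<in>F. \<nu> * s i \<le> G i" "r < \<nu>" "i \<in> F" "s i > 0" "G i = r * s i"
  shows False
proof -
  have "\<nu> * s i \<le> G i" using assms by auto
  moreover have "r * s i < \<nu> * s i" using assms by simp
  ultimately show False using assms by linarith
qed

lemma crit_no_lower:
  fixes G s :: "'i \<Rightarrow> real"
  assumes "\<forall>i\<in>F. \<mu> * s i \<le> G i" "\<mu> < r" "i \<in> F" "s i < 0" "G i = r * s i"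
  shows False
proof -
  have "\<mu> * s i \<le> G i" using assms by auto
  moreover have "r * s i < \<mu> * s i" using assms by simp
  ultimately show False using assms by linarith
qed

lemma crit_identity:
  fixes G s :: "'i \<Rightarrow> real"
  assumes fin: "finite F"
  defines "A \<equiv> \<lambda>r. \<forall>i\<in>F. r * s i \<le> G i"
  shows "(if A 0 then 1 else 0) - (if A 1 then 1 else 0) =
     (if \<exists>r. 0 \<le> r \<and> r < 1 \<and> A r \<and> (\<exists>i\<in>F. s i > 0 \<and> G i = r * s i) then 1 else 0)
   - (if \<exists>r. 0 < r \<and> r \<le> 1 \<and> A r \<and> (\<exists>i\<in>F. s i < 0 \<and> G i = r * s i) then 1 else (0::real))"
proof -
  let ?X = "\<exists>r. 0 \<le> r \<and> r < 1 \<and> A r \<and> (\<exists>i\<in>F. s i > 0 \<and> G i = r * s i)"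
  let ?Y = "\<exists>r. 0 < r \<and> r \<le> 1 \<and> A r \<and> (\<exists>i\<in>F. s i < 0 \<and> G i = r * s i)"
  have nX: "\<not> ?X" if "A 1"
  proof
    assume ?X
    then obtain r i where "r < 1" "i \<in> F" "s i > 0" "G i = r * s i" by blast
    then show False using crit_no_upper[of F 1 s G r i] that unfolding A_def by blast
  qed
  have nY: "\<not> ?Y" if "A 0"
  proof
    assume ?Y
    then obtain r i where "0 < r" "i \<in> F" "s i < 0" "G i = r * s i" by blast
    then show False using crit_no_lower[of F 0 s G r i] that unfolding A_def by blast
  qed
  have X: ?X if "A 0" "\<not> A 1"
  proof -
    have a0: "\<forall>i\<in>F. 0 * s i \<le> G i" using that unfolding A_def by simp
    have a1: "\<not> (\<forall>i\<in>F. 1 * s i \<le> G i)" using that unfolding A_def by simp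
    obtain b where "0 \<le> b" "b < 1" "\<forall>i\<in>F. b * s i \<le> G i" "\<exists>i\<in>F. s i > 0 \<and> G i = b * s i"
      using crit_upper[OF fin a0 a1 zero_less_one] by blast
    then show ?thesis unfolding A_def by blast
  qed
  have Y: ?Y if "\<not> A 0" "A 1"
  proof -
    have a0: "\<not> (\<forall>i\<in>F. 0 * s i \<le> G i)" using that unfolding A_def by simp
    have a1: "\<forall>i\<in>F. 1 * s i \<le> G i" using that unfolding A_def by simp
    obtain b where "0 < b" "b \<le> 1" "\<forall>i\<in>F. b * s i \<le> G i" "\<exists>i\<in>F. s i < 0 \<and> G i = b * s i"
      using crit_lower[OF fin a1 a0 zero_less_one] by blast
    then show ?thesis unfolding A_def by blast
  qed
  have XY: "?X \<longleftrightarrow> ?Y" if "\<not> A 0" "\<not> A 1"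
  proof
    assume ?X
    then obtain r where l: "0 \<le> r" "r < 1" "A r" by blast
    have "r \<noteq> 0" using l that by auto
    then have "0 < r" using l by auto
    have a0: "\<not> (\<forall>i\<in>F. 0 * s i \<le> G i)" using that unfolding A_def by simp
    have a1: "\<forall>i\<in>F. r * s i \<le> G i" using l unfolding A_def by simp
    obtain b where "0 < b" "b \<le> r" "\<forall>i\<in>F. b * s i \<le> G i" "\<exists>i\<in>F. s i < 0 \<and> G i = b * s i"
      using crit_lower[OF fin a1 a0 \<open>0 < r\<close>] by blast
    then show ?Y using l unfolding A_def by (intro exI[of _ b]) auto
  next
    assume ?Y
    then obtain r where l: "0 < r" "r \<le> 1" "A r" by blast
    have "r \<noteq> 1" using l that by auto
    then have "r < 1" using l by auto
    have a1: "\<not> (\<forall>i\<in>F. 1 * s i \<le> G i)" using that unfolding A_def by simp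
    have a0: "\<forall>i\<in>F. r * s i \<le> G i" using l unfolding A_def by simp
    obtain b where "r \<le> b" "b < 1" "\<forall>i\<in>F. b * s i \<le> G i" "\<exists>i\<in>F. s i > 0 \<and> G i = b * s i"
      using crit_upper[OF fin a0 a1 \<open>r < 1\<close>] by blast
    then show ?X using l unfolding A_def by (intro exI[of _ b]) auto
  qed
  show ?thesis
  proof (cases "A 0")
    case True
    show ?thesis
    proof (cases "A 1")
      case True
      then show ?thesis using nX nY \<open>A 0\<close> by simp
    next
      case False
      then show ?thesis using X nY \<open>A 0\<close> by simp
    qed
  next
    case False
    show ?thesis
    proof (cases "A 1")
      case True
      then show ?thesis using nX Y \<open>\<not> A 0\<close> by simp
    next
      case False
      then show ?thesis using XY \<open>\<not> A 0\<close> by simp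
    qed
  qed
qed

lemma common_denom:
  assumes "finite A" "A \<subseteq> \<rat>"
  shows "\<exists>D::nat. D > 0 \<and> (\<forall>r\<in>A. real D * r \<in> \<int>)"
  using assms
proof (induction A rule: finite_induct)
  case empty
  then show ?case by (intro exI[of _ 1]) auto
next
  case (insert x A)
  then obtain D where D: "D > 0" "\<forall>r\<in>A. real D * r \<in> \<int>" by auto
  have "x \<in> \<rat>" using insert by auto
  then obtain p q where pq: "q > 0" "x = of_int p / of_int q" by (elim Rats_cases') auto
  define D' where "D' = D * nat q"
  have "D' > 0" using D pq unfolding D'_def by auto
  moreover have "real D' * x \<in> \<int>"
    using pq unfolding D'_def by (simp add: of_nat_mult)
  moreover have "real D' * r \<in> \<int>" if "r \<in> A" for r
  proof -
    have eq: "real D' * r = of_int q * (real D * r)" using pq unfolding D'_def by (simp add: algebra_simps)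
    have "real D * r \<in> \<int>" using D that by blast
    then show ?thesis unfolding eq by (rule Ints_mult[OF Ints_of_int])
  qed
  ultimately show ?case by auto
qed

lemma coneC_mem1:
  "x \<in> coneC Q \<tau> \<Longrightarrow> fst x > 0 \<and> (1 / fst x) *\<^sub>R (snd x - \<tau>) \<in> Q"
proof -
  assume "x \<in> coneC Q \<tau>"
  then obtain t v where "x = (t, t *\<^sub>R v + \<tau>)" "t > 0" "v \<in> Q" unfolding coneC_def by auto
  then show "fst x > 0 \<and> (1 / fst x) *\<^sub>R (snd x - \<tau>) \<in> Q" by simp
qed

lemma coneC_mem2:
  assumes a: "fst x > 0 \<and> (1 / fst x) *\<^sub>R (snd x - \<tau>) \<in> Q"
  shows "x \<in> coneC Q \<tau>"
proof -
  define v where "v = (1 / fst x) *\<^sub>R (snd x - \<tau>)"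
  have eq: "snd x = fst x *\<^sub>R v + \<tau>" using a unfolding v_def by simp
  have "v \<in> Q" using a unfolding v_def by simp
  have "(fst x, fst x *\<^sub>R v + \<tau>) \<in> coneC Q \<tau>" unfolding coneC_def using a \<open>v \<in> Q\<close> by blast
  then show "x \<in> coneC Q \<tau>" using eq by (metis prod.collapse)
qed

lemma coneC_mem:
  "x \<in> coneC Q \<tau> \<longleftrightarrow> fst x > 0 \<and> (1 / fst x) *\<^sub>R (snd x - \<tau>) \<in> Q"
  using coneC_mem1 coneC_mem2 by blast

lemma lat_ind_eq: "lat_ind Lam Q \<tau> x = (if x \<in> ZLat Lam \<and> x \<in> coneC Q \<tau> then 1 else 0)"
  unfolding lat_ind_def indicator_def by (cases "x \<in> ZLat Lam"; cases "x \<in> coneC Q \<tau>") simp_all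

lemma lat_basis_in:
  assumes "Lam = range (\<lambda>z :: 'n \<Rightarrow> int. \<Sum>i\<in>UNIV. of_int (z i) *\<^sub>R (b i :: real^'n))"
  shows "b j \<in> Lam"
proof -
  have "(\<Sum>i\<in>UNIV. of_int (if i = j then 1 else 0) *\<^sub>R b i) = (\<Sum>i\<in>UNIV. if i = j then b i else 0)"
  proof (rule sum.cong[OF refl])
    fix i show "of_int (if i = j then 1 else 0) *\<^sub>R b i = (if i = j then b i else 0)" by (cases "i = j") auto
  qed
  also have "\<dots> = b j" by simp
  finally have eq: "(\<Sum>i\<in>UNIV. of_int (if i = j then 1 else 0) *\<^sub>R b i) = b j" .
  show ?thesis unfolding assms(1)
    by (rule range_eqI[where x="\<lambda>i. if i = j then 1 else 0"]) (rule eq[symmetric])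
qed

lemma lat_nat_mult:
  assumes "Lam = range (\<lambda>z :: 'n \<Rightarrow> int. \<Sum>i\<in>UNIV. of_int (z i) *\<^sub>R (b i :: real^'n))"
    and "x \<in> Lam"
  shows "real p *\<^sub>R x \<in> Lam"
proof -
  obtain z where z: "x = (\<Sum>i\<in>UNIV. of_int (z i) *\<^sub>R b i)" using assms(2) unfolding assms(1) by blast
  have eq: "real p *\<^sub>R x = (\<lambda>z. \<Sum>i\<in>UNIV. of_int (z i) *\<^sub>R b i) (\<lambda>i. int p * z i)"
    unfolding z by (simp add: scaleR_sum_right)
  show ?thesis unfolding assms(1)
    by (rule range_eqI[where x="\<lambda>i. int p * z i"]) (rule eq)
qed

lemma rat_lattice_scale:
  assumes "Lam = range (\<lambda>z :: 'n \<Rightarrow> int. \<Sum>i\<in>UNIV. of_int (z i) *\<^sub>R (b i :: real^'n))"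
    and "\<sigma> \<in> rat_lattice Lam" "r \<in> \<rat>" "r \<ge> 0"
  shows "r *\<^sub>R \<sigma> \<in> rat_lattice Lam"
proof -
  obtain m x where mx: "\<sigma> = (1 / real m) *\<^sub>R x" "m > 0" "x \<in> Lam"
    using assms(2) unfolding rat_lattice_def by auto
  obtain p q where pq: "q > 0" "r = of_int p / of_int q" using assms(3) by (elim Rats_cases') auto
  have "p \<ge> 0" using pq assms(4) by (simp add: zero_le_divide_iff)
  have rq: "r = real (nat p) / real (nat q)" using pq \<open>p \<ge> 0\<close> by simp
  have "r *\<^sub>R \<sigma> = (1 / real (nat q * m)) *\<^sub>R (real (nat p) *\<^sub>R x)"
    unfolding mx(1) rq by (simp add: of_nat_mult)
  moreover have "nat q * m > 0" using pq mx by simp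
  moreover have "real (nat p) *\<^sub>R x \<in> Lam" using lat_nat_mult[OF assms(1) mx(3)] .
  ultimately show ?thesis unfolding rat_lattice_def
    by (intro CollectI exI[of _ "nat q * m"] exI[of _ "real (nat p) *\<^sub>R x"] conjI)
qed

lemma rat_functional_rat:
  assumes "rat_functional Lam a" "\<sigma> \<in> rat_lattice Lam"
  shows "a \<bullet> \<sigma> \<in> \<rat>"
proof -
  obtain m x where mx: "\<sigma> = (1 / real m) *\<^sub>R x" "m > 0" "x \<in> Lam"
    using assms(2) unfolding rat_lattice_def by auto
  have "a \<bullet> x \<in> \<rat>" using assms(1) mx unfolding rat_functional_def by auto
  then show ?thesis using mx by (simp add: Rats_divide)
qed

lemma lattice_grid:
  fixes F :: "((real^'n) \<times> real) set"
  assumes "Lam = range (\<lambda>z :: 'n \<Rightarrow> int. \<Sum>i\<in>UNIV. of_int (z i) *\<^sub>R (b i :: real^'n))"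
    and "finite F" "\<forall>p\<in>F. rat_functional Lam (fst p) \<and> snd p \<in> \<rat>"
  shows "\<exists>D::nat. D > 0 \<and> (\<forall>p\<in>F. \<forall>t y. t \<in> \<int> \<longrightarrow> y \<in> Lam \<longrightarrow> real D * (fst p \<bullet> y - snd p * t) \<in> \<int>)"
proof -
  define A where "A = snd ` F \<union> (\<lambda>(p, j). fst p \<bullet> b j) ` (F \<times> UNIV)"
  have "finite A" unfolding A_def using assms(2) by auto
  moreover have "A \<subseteq> \<rat>"
  proof
    fix r assume "r \<in> A"
    then consider "r \<in> snd ` F" | p j where "p \<in> F" "r = fst p \<bullet> b j" unfolding A_def by auto
    then show "r \<in> \<rat>"
    proof cases
      case 1 then show ?thesis using assms(3) by auto
    next
      case 2
      have "b j \<in> Lam" by (rule lat_basis_in[OF assms(1)])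
      then show ?thesis using 2 assms(3) unfolding rat_functional_def by auto
    qed
  qed
  ultimately obtain D where D: "D > 0" "\<forall>r\<in>A. real D * r \<in> \<int>" using common_denom by blast
  have "real D * (fst p \<bullet> y - snd p * t) \<in> \<int>" if pF: "p \<in> F" and tZ: "t \<in> \<int>" and yL: "y \<in> Lam" for p t y
  proof -
    obtain z where z: "y = (\<Sum>i\<in>UNIV. of_int (z i) *\<^sub>R b i)" using yL assms(1) by auto
    have "real D * (fst p \<bullet> y - snd p * t) = (\<Sum>i\<in>UNIV. of_int (z i) * (real D * (fst p \<bullet> b i))) - (real D * snd p) * t"
    proof -
      have "fst p \<bullet> y = (\<Sum>i\<in>UNIV. of_int (z i) * (fst p \<bullet> b i))"
        unfolding z by (simp add: inner_sum_right)
      then have "real D * (fst p \<bullet> y) = (\<Sum>i\<in>UNIV. of_int (z i) * (real D * (fst p \<bullet> b i)))"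
        by (simp add: sum_distrib_left mult.left_commute)
      then show ?thesis by (simp add: right_diff_distrib mult.assoc)
    qed
    also have "\<dots> \<in> \<int>"
    proof -
      have "real D * (fst p \<bullet> b i) \<in> \<int>" for i
      proof -
        have "(\<lambda>(p, j). fst p \<bullet> b j) (p, i) \<in> (\<lambda>(p, j). fst p \<bullet> b j) ` (F \<times> UNIV)"
          by (rule imageI) (use pF in simp)
        then have "fst p \<bullet> b i \<in> A" unfolding A_def by simp
        then show ?thesis using D by blast
      qed
      moreover have "real D * snd p \<in> \<int>"
      proof -
        have "snd p \<in> A" unfolding A_def using pF by simp
        then show ?thesis using D by blast
      qed
      ultimately show ?thesis
        by (intro Ints_diff Ints_sum Ints_mult[OF Ints_of_int] Ints_mult[OF _ tZ])
    qed
    finally show ?thesis .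
  qed
  then show ?thesis using D by blast
qed

lemma sum_unique_ind:
  assumes "finite L" "\<And>r1 r2. Q r1 \<Longrightarrow> Q r2 \<Longrightarrow> r1 = r2"
  shows "(\<Sum>r\<in>L. if Q r then 1 else 0) = (if \<exists>r\<in>L. Q r then 1 else (0::real))"
proof (cases "\<exists>r\<in>L. Q r")
  case True
  then obtain r0 where "r0 \<in> L" "Q r0" by auto
  then have "(\<Sum>r\<in>L. if Q r then 1 else (0::real)) = (\<Sum>r\<in>L. if r = r0 then 1 else 0)"
    using assms(2) by (intro sum.cong) auto
  also have "\<dots> = 1" using \<open>r0 \<in> L\<close> assms(1) by simp
  finally show ?thesis using True by simp
next
  case False
  then show ?thesis by simp
qed

definition PSet :: "((real^'n) \<times> real) set \<Rightarrow> ((real^'n) \<times> real) set \<Rightarrow> (real^'n) set" where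
  "PSet F S = {v. (\<forall>p\<in>F. snd p \<le> fst p \<bullet> v) \<and> (\<forall>p\<in>S. fst p \<bullet> v = snd p)}"

lemma PSet_mem_scaled:
  fixes t r :: real and y \<sigma> :: "real^'n" and F S :: "((real^'n) \<times> real) set"
  assumes "t > 0"
  shows "(1 / t) *\<^sub>R (y - r *\<^sub>R \<sigma>) \<in> PSet F S \<longleftrightarrow>
     (\<forall>p\<in>F. r * (fst p \<bullet> \<sigma>) \<le> fst p \<bullet> y - snd p * t) \<and>
     (\<forall>p\<in>S. fst p \<bullet> y - snd p * t = r * (fst p \<bullet> \<sigma>))"
proof -
  have ip: "fst p \<bullet> ((1 / t) *\<^sub>R (y - r *\<^sub>R \<sigma>)) = (fst p \<bullet> y - r * (fst p \<bullet> \<sigma>)) / t" for p :: "(real^'n) \<times> real"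
    by (simp add: inner_diff_right divide_inverse)
  have le: "snd p \<le> fst p \<bullet> ((1 / t) *\<^sub>R (y - r *\<^sub>R \<sigma>)) \<longleftrightarrow> r * (fst p \<bullet> \<sigma>) \<le> fst p \<bullet> y - snd p * t" for p :: "(real^'n) \<times> real"
    unfolding ip using assms by (simp add: pos_le_divide_eq algebra_simps)
  have eq: "fst p \<bullet> ((1 / t) *\<^sub>R (y - r *\<^sub>R \<sigma>)) = snd p \<longleftrightarrow> fst p \<bullet> y - snd p * t = r * (fst p \<bullet> \<sigma>)" for p :: "(real^'n) \<times> real"
    unfolding ip using assms by (auto simp: divide_eq_eq algebra_simps)
  show ?thesis unfolding PSet_def using le eq by auto
qed

lemma PSet_rat:
  assumes "finite F" "\<forall>p\<in>F. rat_functional Lam (fst p) \<and> snd p \<in> \<rat>" "S \<subseteq> F"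
  shows "rat_polyhedron Lam (PSet F S)"
proof -
  define F' where "F' = F \<union> (\<lambda>p. (- fst p, - snd p)) ` S"
  have "finite F'" unfolding F'_def using assms(1,3) finite_subset by auto
  moreover have "\<forall>(a,c)\<in>F'. rat_functional Lam a \<and> c \<in> \<rat>"
  proof (clarify)
    fix a c assume ac: "(a, c) \<in> F'"
    show "rat_functional Lam a \<and> c \<in> \<rat>"
    proof (cases "(a, c) \<in> F")
      case True then show ?thesis using assms(2) by auto
    next
      case False
      then obtain p where p: "p \<in> S" "a = - fst p" "c = - snd p" using ac unfolding F'_def by auto
      then have "p \<in> F" using assms(3) by auto
      then have "rat_functional Lam (fst p)" "snd p \<in> \<rat>" using assms(2) by auto
      then show ?thesis using p unfolding rat_functional_def by auto
    qed
  qed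
  moreover have "PSet F S = (\<Inter>(a,c)\<in>F'. {v. a \<bullet> v \<ge> c})"
  proof (intro set_eqI iffI)
    fix v assume v: "v \<in> PSet F S"
    show "v \<in> (\<Inter>(a,c)\<in>F'. {v. a \<bullet> v \<ge> c})"
    proof (clarsimp)
      fix a c assume "(a, c) \<in> F'"
      then consider "(a, c) \<in> F" | p where "p \<in> S" "a = - fst p" "c = - snd p" unfolding F'_def by auto
      then show "c \<le> a \<bullet> v"
      proof cases
        case 1 then show ?thesis using v unfolding PSet_def by force
      next
        case 2 then show ?thesis using v unfolding PSet_def by force
      qed
    qed
  next
    fix v assume v: "v \<in> (\<Inter>(a,c)\<in>F'. {v. a \<bullet> v \<ge> c})"
    have A: "snd p \<le> fst p \<bullet> v" if "p \<in> F" for p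
    proof -
      have "p \<in> F'" using that unfolding F'_def by auto
      then show ?thesis using v by (cases p) force
    qed
    have B: "fst p \<bullet> v = snd p" if "p \<in> S" for p
    proof -
      have "(- fst p, - snd p) \<in> F'" using that unfolding F'_def by auto
      then have "- snd p \<le> - fst p \<bullet> v" using v by force
      moreover have "snd p \<le> fst p \<bullet> v" using A that assms(3) by auto
      ultimately show ?thesis by simp
    qed
    show "v \<in> PSet F S" unfolding PSet_def using A B by auto
  qed
  ultimately show ?thesis unfolding rat_polyhedron_def by blast
qed

lemma PSet_dim:
  assumes "S \<subseteq> F" "p0 \<in> S" "fst p0 \<bullet> \<sigma> \<noteq> 0" "\<sigma> \<in> lin_space (PSet F {})" "PSet F S \<noteq> {}"
  shows "aff_dim (PSet F S) \<le> aff_dim (PSet F {}) - 1"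
proof (rule ccontr)
  let ?Q = "PSet F S" and ?P = "PSet F {}"
  assume "\<not> ?thesis"
  have sub: "?Q \<subseteq> ?P" unfolding PSet_def by auto
  then have "aff_dim ?Q \<le> aff_dim ?P" by (rule aff_dim_subset)
  with \<open>\<not> ?thesis\<close> have deq: "aff_dim ?Q = aff_dim ?P" by simp
  have "affine hull ?Q = affine hull ?P"
    using affine_dim_equal[of "affine hull ?Q" "affine hull ?P"] hull_mono[OF sub, of affine] deq assms(5)
    by simp
  define H where "H = {v. fst p0 \<bullet> v = snd p0}"
  have "?Q \<subseteq> H" unfolding H_def PSet_def using assms(2) by auto
  then have "affine hull ?Q \<subseteq> H" by (intro hull_minimal) (auto simp: H_def affine_hyperplane)
  then have PH: "?P \<subseteq> H" using \<open>affine hull ?Q = affine hull ?P\<close> hull_subset[of ?P affine] by auto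
  have "{x - y | x y. x \<in> ?P \<and> y \<in> ?P} \<subseteq> {z. fst p0 \<bullet> z = 0}"
  proof clarify
    fix x y assume "x \<in> ?P" "y \<in> ?P"
    then have "fst p0 \<bullet> x = snd p0" "fst p0 \<bullet> y = snd p0" using PH unfolding H_def by auto
    then show "fst p0 \<bullet> (x - y) = 0" by (simp add: inner_diff_right)
  qed
  then have "span {x - y | x y. x \<in> ?P \<and> y \<in> ?P} \<subseteq> {z. fst p0 \<bullet> z = 0}"
    by (intro span_minimal subspace_hyperplane)
  then have "fst p0 \<bullet> \<sigma> = 0" using assms(4) unfolding lin_space_def by auto
  then show False using assms(3) by simp
qed


lemma PSet_cone:
  fixes F S :: "((real^'n) \<times> real) set"
  assumes fin: "finite F" and rat: "\<forall>p\<in>F. rat_functional Lam (fst p) \<and> snd p \<in> \<rat>" and SF: "S \<subseteq> F"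
    and Pe: "PSet F {} = (\<lambda>k. w + k) ` K" and Kne: "K \<noteq> {}" and Kc: "cone K" and Kcv: "convex K"
    and Kcl: "closed K" and Kp: "polyhedron K"
    and L: "L = (\<lambda>k. w + k) ` (K \<inter> uminus ` K)" and ne: "PSet F S \<noteq> {}"
  shows "rat_cone_with_apex Lam (PSet F S) L"
proof -
  have K0: "0 \<in> K" using Kc Kne cone_contains_0 by blast
  have wP: "w \<in> PSet F {}" using Pe K0 by force
  have Pmem: "w + k \<in> PSet F {}" if "k \<in> K" for k using Pe that by blast
  have nonneg: "fst p \<bullet> k \<ge> 0" if pF: "p \<in> F" and kK: "k \<in> K" for p k
  proof (rule ccontr)
    assume neg: "\<not> fst p \<bullet> k \<ge> 0"
    have wge: "snd p \<le> fst p \<bullet> w" using wP pF unfolding PSet_def by auto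
    define l where "l = (fst p \<bullet> w - snd p + 1) / (- (fst p \<bullet> k))"
    have "l \<ge> 0" unfolding l_def using neg wge by (intro divide_nonneg_pos) auto
    then have "l *\<^sub>R k \<in> K" using Kc kK by (simp add: mem_cone)
    then have "w + l *\<^sub>R k \<in> PSet F {}" by (rule Pmem)
    then have "snd p \<le> fst p \<bullet> w + l * (fst p \<bullet> k)" using pF unfolding PSet_def by (auto simp: inner_add_right)
    moreover have "l * (fst p \<bullet> k) = - (fst p \<bullet> w - snd p + 1)" unfolding l_def using neg by simp
    ultimately show False by simp
  qed
  have tight: "fst p \<bullet> w = snd p" if pS: "p \<in> S" for p
  proof -
    obtain v where v: "v \<in> PSet F S" using ne by auto
    then have "v \<in> PSet F {}" unfolding PSet_def by auto
    then obtain k where k: "k \<in> K" "v = w + k" using Pe by auto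
    have "fst p \<bullet> v = snd p" using v pS unfolding PSet_def by auto
    moreover have "fst p \<bullet> k \<ge> 0" using pS SF k(1) by (intro nonneg) auto
    moreover have "snd p \<le> fst p \<bullet> w" using wP pS SF unfolding PSet_def by auto
    ultimately show ?thesis using k by (simp add: inner_add_right)
  qed
  define KS where "KS = K \<inter> \<Inter>((\<lambda>p. {k. fst p \<bullet> k = 0}) ` S)"
  have finS: "finite S" using fin SF finite_subset by auto
  have KSmem: "k \<in> KS \<longleftrightarrow> k \<in> K \<and> (\<forall>p\<in>S. fst p \<bullet> k = 0)" for k unfolding KS_def by auto
  have eqQ: "PSet F S = (\<lambda>k. w + k) ` KS"
  proof (intro set_eqI iffI)
    fix v assume v: "v \<in> PSet F S"
    then have "v \<in> PSet F {}" unfolding PSet_def by auto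
    then obtain k where k: "k \<in> K" "v = w + k" using Pe by auto
    have "fst p \<bullet> k = 0" if "p \<in> S" for p
      using v that tight[OF that] k unfolding PSet_def by (auto simp: inner_add_right)
    then have "k \<in> KS" using k KSmem by auto
    then show "v \<in> (\<lambda>k. w + k) ` KS" using k by auto
  next
    fix v assume "v \<in> (\<lambda>k. w + k) ` KS"
    then obtain k where k: "k \<in> KS" "v = w + k" by auto
    then have "v \<in> PSet F {}" using Pmem KSmem by auto
    moreover have "fst p \<bullet> v = snd p" if "p \<in> S" for p
      using k KSmem tight[OF that] that by (auto simp: inner_add_right)
    ultimately show "v \<in> PSet F S" unfolding PSet_def by auto
  qed
  have "0 \<in> KS" using K0 KSmem by simp
  then have "KS \<noteq> {}" by blast
  moreover have "cone KS"
    unfolding cone_def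
  proof (intro ballI allI impI)
    fix k and c :: real assume "k \<in> KS" "c \<ge> 0"
    then show "c *\<^sub>R k \<in> KS" using KSmem Kc by (auto simp: mem_cone)
  qed
  moreover have "convex KS" unfolding KS_def
    by (intro convex_Int Kcv convex_INT) (auto intro: convex_hyperplane)
  moreover have "closed KS" unfolding KS_def
    by (intro closed_Int Kcl closed_INT) (auto intro: closed_hyperplane)
  moreover have "polyhedron KS" unfolding KS_def
    using finS by (intro polyhedron_Int Kp polyhedron_Inter) (auto intro: polyhedron_hyperplane)
  moreover have "KS \<inter> uminus ` KS = K \<inter> uminus ` K"
  proof (intro set_eqI iffI)
    fix k assume "k \<in> KS \<inter> uminus ` KS"
    then show "k \<in> K \<inter> uminus ` K" using KSmem by auto
  next
    fix k assume k: "k \<in> K \<inter> uminus ` K"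
    then have "- k \<in> K" by auto
    have z: "fst p \<bullet> k = 0" if "p \<in> S" for p
    proof -
      have "fst p \<bullet> k \<ge> 0" using that SF k by (intro nonneg) auto
      moreover have "fst p \<bullet> (- k) \<ge> 0" using that SF \<open>- k \<in> K\<close> by (intro nonneg) auto
      ultimately show ?thesis by simp
    qed
    then have "k \<in> KS" "- k \<in> KS" using k \<open>- k \<in> K\<close> KSmem by auto
    then show "k \<in> KS \<inter> uminus ` KS" by (auto intro: image_eqI[of k uminus "- k"])
  qed
  ultimately show ?thesis
    unfolding rat_cone_with_apex_def using PSet_rat[OF fin rat SF] eqQ L
    by (intro conjI exI[of _ w] exI[of _ KS]) auto
qed

lemma incl_excl_ind:
  fixes E :: "'i \<Rightarrow> bool"
  assumes "finite T"
  shows "(\<Sum>S\<in>{S. S \<subseteq> T \<and> S \<noteq> {}}. (-1) ^ (card S + 1) * (if \<forall>i\<in>S. E i then 1 else 0))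
         = (if \<exists>i\<in>T. E i then 1 else (0::real))"
proof -
  let ?e = "\<lambda>i. if E i then 1 else (0::real)"
  have pe: "(\<Prod>i\<in>S. ?e i) = (if \<forall>i\<in>S. E i then 1 else 0)" if "finite S" for S :: "'i set"
    using that by (induction S rule: finite_induct) auto
  have "(\<Prod>i\<in>T. 1 - ?e i) = (\<Sum>X\<in>Pow T. (-1) ^ card X * (\<Prod>i\<in>X. ?e i) * (\<Prod>i\<in>T-X. 1))"
    by (rule prod_diff_conv_sum[OF assms])
  also have "\<dots> = (\<Sum>X\<in>Pow T. (-1) ^ card X * (\<Prod>i\<in>X. ?e i))" by simp
  also have "\<dots> = (\<Sum>X\<in>insert {} {S. S \<subseteq> T \<and> S \<noteq> {}}. (-1) ^ card X * (\<Prod>i\<in>X. ?e i))"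
    by (rule sum.cong) auto
  also have "\<dots> = 1 + (\<Sum>X\<in>{S. S \<subseteq> T \<and> S \<noteq> {}}. (-1) ^ card X * (\<Prod>i\<in>X. ?e i))"
    using assms by (subst sum.insert) auto
  finally have A: "(\<Sum>X\<in>{S. S \<subseteq> T \<and> S \<noteq> {}}. (-1) ^ card X * (\<Prod>i\<in>X. ?e i)) = (\<Prod>i\<in>T. 1 - ?e i) - 1"
    by simp
  have B: "(\<Prod>i\<in>T. 1 - ?e i) = (if \<exists>i\<in>T. E i then 0 else 1)"
    using assms by (induction T rule: finite_induct) auto
  have "(\<Sum>S\<in>{S. S \<subseteq> T \<and> S \<noteq> {}}. (-1) ^ (card S + 1) * (if \<forall>i\<in>S. E i then 1 else 0))
      = (\<Sum>S\<in>{S. S \<subseteq> T \<and> S \<noteq> {}}. - ((-1) ^ card S * (\<Prod>i\<in>S. ?e i)))"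
  proof (rule sum.cong)
    fix S assume "S \<in> {S. S \<subseteq> T \<and> S \<noteq> {}}"
    then have "finite S" using assms finite_subset by auto
    then show "(-1) ^ (card S + 1) * (if \<forall>i\<in>S. E i then 1 else 0) = - ((-1) ^ card S * (\<Prod>i\<in>S. ?e i))"
      using pe[OF \<open>finite S\<close>] by simp
  qed simp
  also have "\<dots> = - ((\<Prod>i\<in>T. 1 - ?e i) - 1)" by (simp add: sum_negf A)
  finally show ?thesis using B by simp
qed

lemma side_sum:
  fixes G s :: "'i \<Rightarrow> real" and A :: "real \<Rightarrow> bool"
  assumes finLc: "finite Lc" and finFp: "finite Fp"
    and uniq: "\<And>r1 r2. A r1 \<and> (\<exists>p\<in>Fp. G p = r1 * s p) \<Longrightarrow> A r2 \<and> (\<exists>p\<in>Fp. G p = r2 * s p) \<Longrightarrow> r1 = r2"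
  shows "(\<Sum>(r,S)\<in>Lc \<times> {S. S \<subseteq> Fp \<and> S \<noteq> {}}. (-1) ^ (card S + 1) * (if A r \<and> (\<forall>p\<in>S. G p = r * s p) then 1 else 0))
       = (if \<exists>r\<in>Lc. A r \<and> (\<exists>p\<in>Fp. G p = r * s p) then 1 else (0::real))"
proof -
  have finSP: "finite {S. S \<subseteq> Fp \<and> S \<noteq> {}}" using finFp by auto
  have "(\<Sum>(r,S)\<in>Lc \<times> {S. S \<subseteq> Fp \<and> S \<noteq> {}}. (-1) ^ (card S + 1) * (if A r \<and> (\<forall>p\<in>S. G p = r * s p) then 1 else (0::real)))
      = (\<Sum>r\<in>Lc. \<Sum>S\<in>{S. S \<subseteq> Fp \<and> S \<noteq> {}}. (-1) ^ (card S + 1) * (if A r \<and> (\<forall>p\<in>S. G p = r * s p) then 1 else 0))"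
    by (rule sum.cartesian_product[symmetric])
  also have "\<dots> = (\<Sum>r\<in>Lc. (if A r then 1 else 0) * (\<Sum>S\<in>{S. S \<subseteq> Fp \<and> S \<noteq> {}}. (-1) ^ (card S + 1) * (if \<forall>p\<in>S. G p = r * s p then 1 else 0)))"
    by (rule sum.cong[OF refl]) (auto simp: sum_distrib_left intro!: sum.cong)
  also have "\<dots> = (\<Sum>r\<in>Lc. (if A r then 1 else 0) * (if \<exists>p\<in>Fp. G p = r * s p then 1 else 0))"
    by (rule sum.cong[OF refl]) (simp only: incl_excl_ind[OF finFp])
  also have "\<dots> = (\<Sum>r\<in>Lc. if A r \<and> (\<exists>p\<in>Fp. G p = r * s p) then 1 else 0)"
    by (rule sum.cong[OF refl]) simp
  also have "\<dots> = (if \<exists>r\<in>Lc. A r \<and> (\<exists>p\<in>Fp. G p = r * s p) then 1 else 0)"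
    by (rule sum_unique_ind[OF finLc]) (rule uniq)
  finally show ?thesis .
qed


lemma ZLat_mem: "x \<in> ZLat Lam \<Longrightarrow> fst x \<in> \<int> \<and> snd x \<in> Lam"
  by (cases x) (simp add: ZLat_def)

lemma neg_one_pow_cases: "(-1::int) ^ n = 1 \<or> (-1::int) ^ n = -1"
  by (cases "even n") simp_all

theorem lemma5p2:
  fixes Lam :: "(real^'n) set" and P :: "(real^'n) set" and \<sigma> :: "real^'n"
  assumes "full_rank_lattice Lam"
    and "rat_polyhedron Lam P"
    and "\<sigma> \<in> lin_space P" and "\<sigma> \<in> rat_lattice Lam"
  shows "(\<lambda>x. lat_ind Lam P 0 x - lat_ind Lam P \<sigma> x) \<in> S_j Lam (aff_dim P - 1) \<and>
         (\<forall>L. rat_cone_with_apex Lam P L \<longrightarrow>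
           (\<exists>(ts :: (int \<times> (real^'n) set \<times> (real^'n)) list).
             (\<forall>(s, Q, tau)\<in>set ts. s \<in> {1, -1} \<and> rat_cone_with_apex Lam Q L \<and>
                 aff_dim Q \<le> aff_dim P - 1 \<and> tau \<in> rat_lattice Lam) \<and>
             (\<forall>x. lat_ind Lam P 0 x - lat_ind Lam P \<sigma> x =
                  sum_list (map (\<lambda>(s, Q, tau). of_int s * lat_ind Lam Q tau x) ts))))"
proof -
  obtain b :: "'n \<Rightarrow> real^'n" where bL: "Lam = range (\<lambda>z :: 'n \<Rightarrow> int. \<Sum>i\<in>UNIV. of_int (z i) *\<^sub>R b i)"
    using assms(1) unfolding full_rank_lattice_def by blast
  obtain F :: "((real^'n) \<times> real) set" where F: "finite F" "\<forall>(a,c)\<in>F. rat_functional Lam a \<and> c \<in> \<rat>"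
     "P = (\<Inter>(a,c)\<in>F. {v. a \<bullet> v \<ge> c})"
    using assms(2) unfolding rat_polyhedron_def by blast
  have Frat: "\<forall>p\<in>F. rat_functional Lam (fst p) \<and> snd p \<in> \<rat>" using F(2) by auto
  have PP: "P = PSet F {}" unfolding F(3) PSet_def by auto
  obtain D :: nat where D: "D > 0" "\<forall>p\<in>F. \<forall>t y. t \<in> \<int> \<longrightarrow> y \<in> Lam \<longrightarrow> real D * (fst p \<bullet> y - snd p * t) \<in> \<int>"
    using lattice_grid[OF bL F(1) Frat] by blast
  define s where "s = (\<lambda>p::(real^'n) \<times> real. fst p \<bullet> \<sigma>)"
  have srat: "s p \<in> \<rat>" if "p \<in> F" for p
    using rat_functional_rat[of Lam "fst p" \<sigma>] Frat that assms(4) unfolding s_def by blast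
  define Fp where "Fp = {p\<in>F. s p > 0}"
  define Fm where "Fm = {p\<in>F. s p < 0}"
  have finFp: "finite Fp" and finFm: "finite Fm" using F(1) unfolding Fp_def Fm_def by auto
  define Lc where "Lc = {r. 0 \<le> r \<and> r \<le> 1 \<and> (\<exists>p\<in>F. s p \<noteq> 0 \<and> real D * r * s p \<in> \<int>)}"
  have finLc: "finite Lc"
  proof -
    define N where "N p = \<lceil>real D * \<bar>s p\<bar>\<rceil>" for p
    have "Lc \<subseteq> (\<Union>p\<in>F. (\<lambda>k. of_int k / (real D * s p)) ` {-N p..N p})"
    proof
      fix r assume r: "r \<in> Lc"
      then obtain p where p: "p \<in> F" "s p \<noteq> 0" "real D * r * s p \<in> \<int>" and r01: "0 \<le> r" "r \<le> 1"
        unfolding Lc_def by blast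
      obtain k where k: "real D * r * s p = of_int k" using p(3) by (elim Ints_cases) auto
      have "\<bar>real D * r * s p\<bar> = real D * r * \<bar>s p\<bar>" using r01 by (simp add: abs_mult)
      also have "\<dots> \<le> real D * 1 * \<bar>s p\<bar>" using r01 by (intro mult_right_mono mult_left_mono) auto
      finally have "of_int \<bar>k\<bar> \<le> real D * \<bar>s p\<bar>" using k by simp
      also have "\<dots> \<le> of_int (N p)" unfolding N_def by (rule le_of_int_ceiling)
      finally have "\<bar>k\<bar> \<le> N p" by linarith
      then have kin: "k \<in> {-N p..N p}" by auto
      have "r = of_int k / (real D * s p)" using k p(2) D(1) by (simp add: field_simps)
      then show "r \<in> (\<Union>p\<in>F. (\<lambda>k. of_int k / (real D * s p)) ` {-N p..N p})"
        using p(1) kin by blast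
    qed
    moreover have "finite (\<Union>p\<in>F. (\<lambda>k. of_int k / (real D * s p)) ` {-N p..N p})"
      using F(1) by auto
    ultimately show ?thesis by (rule finite_subset)
  qed
  have Lc_rat: "r \<in> \<rat> \<and> 0 \<le> r" if rL: "r \<in> Lc" for r
  proof -
    obtain p where p: "p \<in> F" "s p \<noteq> 0" "real D * r * s p \<in> \<int>" and r0: "0 \<le> r"
      using rL unfolding Lc_def by blast
    have "r = (real D * r * s p) / (real D * s p)" using p(2) D(1) by simp
    moreover have "real D * r * s p \<in> \<rat>" using p(3) Ints_subset_Rats by blast
    moreover have "real D * s p \<in> \<rat>" using srat[OF p(1)] by simp
    ultimately show ?thesis using r0 by (metis Rats_divide)
  qed
  have Lc_lat: "r *\<^sub>R \<sigma> \<in> rat_lattice Lam" if "r \<in> Lc" for r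
    using Lc_rat[OF that] by (intro rat_lattice_scale[OF bL assms(4)]) auto
  define SP where "SP = {S. S \<subseteq> Fp \<and> S \<noteq> {}}"
  define SM where "SM = {S. S \<subseteq> Fm \<and> S \<noteq> {}}"
  define Tp where "Tp = (\<lambda>(r,S). (r,S,True)) ` ((Lc \<inter> {..<1}) \<times> SP)"
  define Tm where "Tm = (\<lambda>(r,S). (r,S,False)) ` ((Lc \<inter> {0<..}) \<times> SM)"
  define T0 where "T0 = Tp \<union> Tm"
  define sg :: "real \<times> ((real^'n) \<times> real) set \<times> bool \<Rightarrow> int"
    where "sg i = (if snd (snd i) then 1 else -1) * (-1) ^ (card (fst (snd i)) + 1)" for i
  define T where "T = {i\<in>T0. PSet F (fst (snd i)) \<noteq> {}}"
  define tm where "tm i x = real_of_int (sg i) * lat_ind Lam (PSet F (fst (snd i))) (fst i *\<^sub>R \<sigma>) x" for i x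
  have finSP: "finite SP" unfolding SP_def using finFp by auto
  have finSM: "finite SM" unfolding SM_def using finFm by auto
  have finTp: "finite Tp" unfolding Tp_def using finLc finSP by auto
  have finTm: "finite Tm" unfolding Tm_def using finLc finSM by auto
  have finT0: "finite T0" unfolding T0_def using finTp finTm by auto
  have finT: "finite T" unfolding T_def using finT0 by auto
  have T0_props: "fst i \<in> Lc \<and> fst (snd i) \<subseteq> F \<and> (\<exists>p\<in>fst (snd i). s p \<noteq> 0)" if "i \<in> T0" for i
    using that unfolding T0_def Tp_def Tm_def SP_def SM_def Fp_def Fm_def by force
  have T_props: "fst i \<in> Lc \<and> fst (snd i) \<subseteq> F \<and> (\<exists>p\<in>fst (snd i). s p \<noteq> 0) \<and> PSet F (fst (snd i)) \<noteq> {}"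
    if "i \<in> T" for i
    using that T0_props unfolding T_def by auto
  have sg_pm: "sg i \<in> {1, -1}" for i
    unfolding sg_def using neg_one_pow_cases[of "card (fst (snd i)) + 1"] by auto
  have key: "lat_ind Lam P 0 x - lat_ind Lam P \<sigma> x = (\<Sum>i\<in>T. tm i x)" for x
  proof -
    have sumT: "(\<Sum>i\<in>T. tm i x) = (\<Sum>i\<in>T0. tm i x)"
    proof (rule sum.mono_neutral_left[OF finT0])
      show "T \<subseteq> T0" unfolding T_def by auto
      show "\<forall>i\<in>T0 - T. tm i x = 0"
        unfolding T_def tm_def lat_ind_eq coneC_mem by auto
    qed
    show ?thesis
    proof (cases "x \<in> ZLat Lam \<and> fst x > 0")
      case False
      then have z: "lat_ind Lam Q \<tau> x = 0" for Q \<tau> unfolding lat_ind_eq coneC_mem by auto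
      show ?thesis unfolding sumT tm_def z by simp
    next
      case True
      then have xpos: "fst x > 0" and xZ: "x \<in> ZLat Lam" by auto
      have tZ: "fst x \<in> \<int>" and yL: "snd x \<in> Lam" using ZLat_mem[OF xZ] by auto
      define G where "G p = fst p \<bullet> snd x - snd p * fst x" for p :: "(real^'n) \<times> real"
      define A where "A r = (\<forall>p\<in>F. r * s p \<le> G p)" for r
      have li: "lat_ind Lam (PSet F S) (r *\<^sub>R \<sigma>) x = (if A r \<and> (\<forall>p\<in>S. G p = r * s p) then 1 else 0)" for S r
        unfolding lat_ind_eq coneC_mem using xZ xpos
        by (simp add: PSet_mem_scaled[OF xpos] A_def G_def s_def)
      have L0: "lat_ind Lam P 0 x = (if A 0 then 1 else 0)" using li[of "{}" 0] PP by simp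
      have L1: "lat_ind Lam P \<sigma> x = (if A 1 then 1 else 0)" using li[of "{}" 1] PP by simp
      have "Tp \<inter> Tm = {}" unfolding Tp_def Tm_def by auto
      then have s0: "(\<Sum>i\<in>T0. tm i x) = (\<Sum>i\<in>Tp. tm i x) + (\<Sum>i\<in>Tm. tm i x)"
        unfolding T0_def using finTp finTm by (simp add: sum.union_disjoint)
      have sp: "(\<Sum>i\<in>Tp. tm i x) = (\<Sum>(r,S)\<in>(Lc \<inter> {..<1}) \<times> SP. (-1) ^ (card S + 1) * (if A r \<and> (\<forall>p\<in>S. G p = r * s p) then 1 else 0))"
        unfolding Tp_def
        by (subst sum.reindex) (auto simp: inj_on_def tm_def sg_def li intro!: sum.cong)
      have sm: "(\<Sum>i\<in>Tm. tm i x) = - (\<Sum>(r,S)\<in>(Lc \<inter> {0<..}) \<times> SM. (-1) ^ (card S + 1) * (if A r \<and> (\<forall>p\<in>S. G p = r * s p) then 1 else 0))"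
        unfolding Tm_def
        by (subst sum.reindex) (auto simp: inj_on_def tm_def sg_def li sum_negf[symmetric] intro!: sum.cong)
      have p1: "(\<Sum>(r,S)\<in>(Lc \<inter> {..<1}) \<times> SP. (-1) ^ (card S + 1) * (if A r \<and> (\<forall>p\<in>S. G p = r * s p) then 1 else 0))
          = (if \<exists>r\<in>Lc \<inter> {..<1}. A r \<and> (\<exists>p\<in>Fp. G p = r * s p) then 1 else (0::real))"
        unfolding SP_def
      proof (rule side_sum)
        show "finite (Lc \<inter> {..<1})" using finLc by auto
        show "finite Fp" by (rule finFp)
        fix r1 r2 assume a1: "A r1 \<and> (\<exists>p\<in>Fp. G p = r1 * s p)" and a2: "A r2 \<and> (\<exists>p\<in>Fp. G p = r2 * s p)"
        then obtain p1 p2 where p1: "p1 \<in> F" "s p1 > 0" "G p1 = r1 * s p1" and p2: "p2 \<in> F" "s p2 > 0" "G p2 = r2 * s p2"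
          unfolding Fp_def by auto
        show "r1 = r2"
        proof (rule linorder_cases[of r1 r2])
          assume "r1 < r2"
          then show ?thesis using crit_no_upper[of F r2 s G r1 p1] a2 p1 unfolding A_def by blast
        next
          assume "r2 < r1"
          then show ?thesis using crit_no_upper[of F r1 s G r2 p2] a1 p2 unfolding A_def by blast
        qed
      qed
      have m1: "(\<Sum>(r,S)\<in>(Lc \<inter> {0<..}) \<times> SM. (-1) ^ (card S + 1) * (if A r \<and> (\<forall>p\<in>S. G p = r * s p) then 1 else 0))
          = (if \<exists>r\<in>Lc \<inter> {0<..}. A r \<and> (\<exists>p\<in>Fm. G p = r * s p) then 1 else (0::real))"
        unfolding SM_def
      proof (rule side_sum)
        show "finite (Lc \<inter> {0<..})" using finLc by auto
        show "finite Fm" by (rule finFm)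
        fix r1 r2 assume a1: "A r1 \<and> (\<exists>p\<in>Fm. G p = r1 * s p)" and a2: "A r2 \<and> (\<exists>p\<in>Fm. G p = r2 * s p)"
        then obtain p1 p2 where p1: "p1 \<in> F" "s p1 < 0" "G p1 = r1 * s p1" and p2: "p2 \<in> F" "s p2 < 0" "G p2 = r2 * s p2"
          unfolding Fm_def by auto
        show "r1 = r2"
        proof (rule linorder_cases[of r1 r2])
          assume "r1 < r2"
          then show ?thesis using crit_no_lower[of F r1 s G r2 p2] a1 p2 unfolding A_def by blast
        next
          assume "r2 < r1"
          then show ?thesis using crit_no_lower[of F r2 s G r1 p1] a2 p1 unfolding A_def by blast
        qed
      qed
      have grid: "r \<in> Lc" if "0 \<le> r" "r \<le> 1" "p \<in> F" "s p \<noteq> 0" "G p = r * s p" for r p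
      proof -
        have "real D * (fst p \<bullet> snd x - snd p * fst x) \<in> \<int>" using D(2) that(3) tZ yL by blast
        then have "real D * r * s p \<in> \<int>" using that(5) unfolding G_def by (simp add: mult.assoc)
        then show ?thesis unfolding Lc_def using that by blast
      qed
      have e1: "(\<exists>r\<in>Lc \<inter> {..<1}. A r \<and> (\<exists>p\<in>Fp. G p = r * s p)) \<longleftrightarrow>
                (\<exists>r. 0 \<le> r \<and> r < 1 \<and> A r \<and> (\<exists>p\<in>F. s p > 0 \<and> G p = r * s p))"
      proof
        assume "\<exists>r\<in>Lc \<inter> {..<1}. A r \<and> (\<exists>p\<in>Fp. G p = r * s p)"
        then show "\<exists>r. 0 \<le> r \<and> r < 1 \<and> A r \<and> (\<exists>p\<in>F. s p > 0 \<and> G p = r * s p)"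
          unfolding Lc_def Fp_def by auto
      next
        assume "\<exists>r. 0 \<le> r \<and> r < 1 \<and> A r \<and> (\<exists>p\<in>F. s p > 0 \<and> G p = r * s p)"
        then obtain r p where rp: "0 \<le> r" "r < 1" "A r" "p \<in> F" "s p > 0" "G p = r * s p" by blast
        then have "r \<in> Lc" using grid[of r p] by auto
        moreover have "p \<in> Fp" using rp unfolding Fp_def by auto
        ultimately show "\<exists>r\<in>Lc \<inter> {..<1}. A r \<and> (\<exists>p\<in>Fp. G p = r * s p)" using rp by blast
      qed
      have e2: "(\<exists>r\<in>Lc \<inter> {0<..}. A r \<and> (\<exists>p\<in>Fm. G p = r * s p)) \<longleftrightarrow>
                (\<exists>r. 0 < r \<and> r \<le> 1 \<and> A r \<and> (\<exists>p\<in>F. s p < 0 \<and> G p = r * s p))"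
      proof
        assume "\<exists>r\<in>Lc \<inter> {0<..}. A r \<and> (\<exists>p\<in>Fm. G p = r * s p)"
        then show "\<exists>r. 0 < r \<and> r \<le> 1 \<and> A r \<and> (\<exists>p\<in>F. s p < 0 \<and> G p = r * s p)"
          unfolding Lc_def Fm_def by auto
      next
        assume "\<exists>r. 0 < r \<and> r \<le> 1 \<and> A r \<and> (\<exists>p\<in>F. s p < 0 \<and> G p = r * s p)"
        then obtain r p where rp: "0 < r" "r \<le> 1" "A r" "p \<in> F" "s p < 0" "G p = r * s p" by blast
        then have "r \<in> Lc" using grid[of r p] by auto
        moreover have "p \<in> Fm" using rp unfolding Fm_def by auto
        ultimately show "\<exists>r\<in>Lc \<inter> {0<..}. A r \<and> (\<exists>p\<in>Fm. G p = r * s p)" using rp by blast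
      qed
      have ci: "(if A 0 then 1 else 0) - (if A 1 then 1 else 0) =
         (if \<exists>r. 0 \<le> r \<and> r < 1 \<and> A r \<and> (\<exists>p\<in>F. s p > 0 \<and> G p = r * s p) then 1 else 0)
       - (if \<exists>r. 0 < r \<and> r \<le> 1 \<and> A r \<and> (\<exists>p\<in>F. s p < 0 \<and> G p = r * s p) then 1 else (0::real))"
        unfolding A_def by (rule crit_identity[OF F(1)])
      show ?thesis unfolding sumT s0 sp sm p1 m1 e1 e2 L0 L1 ci by simp
    qed
  qed
  define g where "g i = (PSet F (fst (snd i)), fst i *\<^sub>R \<sigma>)" for i :: "real \<times> ((real^'n) \<times> real) set \<times> bool"
  have memb: "rat_polyhedron Lam (PSet F (fst (snd i))) \<and> aff_dim (PSet F (fst (snd i))) \<le> aff_dim P - 1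
      \<and> fst i *\<^sub>R \<sigma> \<in> rat_lattice Lam" if iT: "i \<in> T" for i
  proof -
    obtain p where p: "p \<in> fst (snd i)" "s p \<noteq> 0" using T_props[OF iT] by blast
    have "aff_dim (PSet F (fst (snd i))) \<le> aff_dim (PSet F {}) - 1"
      by (rule PSet_dim[OF _ p(1)]) (use T_props[OF iT] p(2) assms(3) PP s_def in auto)
    then show ?thesis using PSet_rat[OF F(1) Frat] T_props[OF iT] Lc_lat PP by auto
  qed
  have part1: "(\<lambda>x. lat_ind Lam P 0 x - lat_ind Lam P \<sigma> x) \<in> S_j Lam (aff_dim P - 1)"
  proof -
    define I where "I = g ` T"
    define q where "q j = (\<lambda>_::real \<times> (real^'n). real_of_int (\<Sum>i\<in>{i\<in>T. g i = j}. sg i))" for j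
    have finI: "finite I" unfolding I_def using finT by auto
    have c1: "\<forall>(Q,\<tau>)\<in>I. rat_polyhedron Lam Q \<and> aff_dim Q \<le> aff_dim P - 1 \<and> \<tau> \<in> rat_lattice Lam"
      unfolding I_def g_def using memb by auto
    have c2: "\<forall>j\<in>I. q j \<in> quasi_poly Lam" unfolding q_def by (auto intro: quasi_poly.qp_const)
    have c3: "locally_finite_family I (\<lambda>(P,\<sigma>). P + closed_segment 0 \<sigma>)"
      unfolding locally_finite_family_def using finI by (intro allI exI[of _ UNIV]) auto
    have c4: "lat_ind Lam P 0 x - lat_ind Lam P \<sigma> x = (\<Sum>j\<in>{j\<in>I. x \<in> coneC (fst j) (snd j)}. q j x)"
      if xZ: "x \<in> ZLat Lam" for x
    proof -
      have "(\<Sum>j\<in>{j\<in>I. x \<in> coneC (fst j) (snd j)}. q j x) = (\<Sum>j\<in>I. if x \<in> coneC (fst j) (snd j) then q j x else 0)"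
        using finI by (simp add: sum.inter_filter)
      also have "\<dots> = (\<Sum>j\<in>I. \<Sum>i\<in>{i\<in>T. g i = j}. real_of_int (sg i) * (if x \<in> coneC (fst (g i)) (snd (g i)) then 1 else 0))"
        unfolding q_def by (intro sum.cong refl) (auto simp: sum_distrib_right)
      also have "\<dots> = (\<Sum>i\<in>T. real_of_int (sg i) * (if x \<in> coneC (fst (g i)) (snd (g i)) then 1 else 0))"
        by (rule sum.group[OF finT finI]) (auto simp: I_def)
      also have "\<dots> = (\<Sum>i\<in>T. tm i x)"
        unfolding tm_def g_def lat_ind_eq using xZ by simp
      finally show ?thesis using key by simp
    qed
    show ?thesis unfolding S_j_def
      using c1 c2 c3 c4 by (intro CollectI exI[of _ I] exI[of _ q] conjI) auto
  qed
  have part2: "\<exists>(ts :: (int \<times> (real^'n) set \<times> (real^'n)) list).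
             (\<forall>(s, Q, tau)\<in>set ts. s \<in> {1, -1} \<and> rat_cone_with_apex Lam Q L \<and>
                 aff_dim Q \<le> aff_dim P - 1 \<and> tau \<in> rat_lattice Lam) \<and>
             (\<forall>x. lat_ind Lam P 0 x - lat_ind Lam P \<sigma> x =
                  sum_list (map (\<lambda>(s, Q, tau). of_int s * lat_ind Lam Q tau x) ts))"
    if Lc: "rat_cone_with_apex Lam P L" for L
  proof -
    obtain w K where wK: "K \<noteq> {}" "cone K" "convex K" "closed K" "polyhedron K"
      "P = (\<lambda>k. w + k) ` K" "L = (\<lambda>k. w + k) ` (K \<inter> uminus ` K)"
      using Lc unfolding rat_cone_with_apex_def by blast
    obtain xs where xs: "set xs = T" "distinct xs" using finite_distinct_list[OF finT] by blast
    define h where "h i = (sg i, PSet F (fst (snd i)), fst i *\<^sub>R \<sigma>)" for i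
    define ts where "ts = map h xs"
    have t1: "\<forall>(s, Q, tau)\<in>set ts. s \<in> {1, -1} \<and> rat_cone_with_apex Lam Q L \<and>
                 aff_dim Q \<le> aff_dim P - 1 \<and> tau \<in> rat_lattice Lam"
    proof (clarify)
      fix s' Q tau assume "(s', Q, tau) \<in> set ts"
      then obtain i where iT: "i \<in> T" and hi: "h i = (s', Q, tau)" unfolding ts_def using xs by auto
      have "rat_cone_with_apex Lam (PSet F (fst (snd i))) L"
        by (rule PSet_cone[OF F(1) Frat _ _ wK(1-5) wK(7)]) (use T_props[OF iT] wK(6) PP in auto)
      then show "s' \<in> {1, -1} \<and> rat_cone_with_apex Lam Q L \<and> aff_dim Q \<le> aff_dim P - 1 \<and> tau \<in> rat_lattice Lam"
        using hi memb[OF iT] sg_pm[of i] unfolding h_def by auto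
    qed
    have t2: "lat_ind Lam P 0 x - lat_ind Lam P \<sigma> x =
                  sum_list (map (\<lambda>(s, Q, tau). of_int s * lat_ind Lam Q tau x) ts)" for x
    proof -
      have "sum_list (map (\<lambda>(s, Q, tau). of_int s * lat_ind Lam Q tau x) ts)
          = sum_list (map (\<lambda>i. tm i x) xs)"
        unfolding ts_def h_def tm_def by (simp add: comp_def)
      also have "\<dots> = (\<Sum>i\<in>T. tm i x)" using xs by (simp add: sum_list_distinct_conv_sum_set)
      finally show ?thesis using key by simp
    qed
    show ?thesis using t1 t2 by blast
  qed
  show ?thesis using part1 part2 by blast
qed

end
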